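(* Let $S=\langle T,\Pi,C\rangle$ be a state space and let $(A_i,\psi_i)$, $1\le i\le k$, be abstractions of $S$ forming an additive abstraction system, and let $t,g\in T$. If $h_{add}(t,g)<C^*_j(t_j,g_j)+R^*_j(t_j,g_j)$ for some $j\in\{1,\dots,k\}$, then $h_{add}(t,g)\ne OPT(t,g)$.
   Context: A state space is a weighted directed graph $S=\langle T,\Pi,C\rangle$ where $T$ is a finite set of states, $\Pi\subseteq T\times T$ is a set of directed edges, and $C:\Pi\to\mathbb{N}=\{0,1,2,\dots\}$. A path from $u$ to $v$ is a sequence of edges $\langle\pi^1,\dots,\pi^n\rangle$ with $\pi^j=(u^{j-1},u^j)\in\Pi$, $u^0=u$, $u^n=v$; its cost is $C(\pi)=\sum_j C(\pi^j)$. $OPT(u,v)$ is the minimum cost of a path from $u$ to $v$ in $S$ (minima over empty sets are $+\infty$). An abstract state space is $A_i=\langle T_i,\Pi_i,C_i,R_i\rangle$ with $T_i$ a set of abstract states, $\Pi_i\subseteq T_i\times T_i$, and edge weights $C_i,R_i:\Pi_i\to\mathbb{N}$ (primary and residual cost), extended additively to paths. An abstraction of $S$ is a pair $(A_i,\psi_i)$ with $\psi_i:T\to T_i$ such that (1) for every $(u,v)\in\Pi$, $(\psi_i(u),\psi_i(v))\in\Pi_i$, and (2) for every $\pi=(u,v)\in\Pi$, $C_i(\pi_i)+R_i(\pi_i)\le C(\pi)$ where $\pi_i=(\psi_i(u),\psi_i(v))$. The system is additive if for every $\pi\in\Pi$, $\sum_{i=1}^k C_i(\pi_i)\le C(\pi)$.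 Write $t_i=\psi_i(t)$. Define $C^*_i(x,y)=\min\{C_i(\rho):\rho\text{ a path from }x\text{ to }y\text{ in }A_i\}$, $h_{add}(t,g)=\sum_{i=1}^k C^*_i(t_i,g_i)$; $P_i(x,y)$ is the set of paths $\rho$ from $x$ to $y$ in $A_i$ with $C_i(\rho)=C^*_i(x,y)$, and $R^*_i(x,y)=\min_{\rho\in P_i(x,y)}R_i(\rho)$. *)

theory Defs
  imports Main "HOL-Library.Extended_Nat"
begin

definition is_path :: "('v \<times> 'v) set \<Rightarrow> 'v \<Rightarrow> 'v \<Rightarrow> ('v \<times> 'v) list \<Rightarrow> bool" where
  "is_path E u v es \<longleftrightarrow>
     set es \<subseteq> E \<and>
     (es = [] \<longrightarrow> u = v) \<and>
     (es \<noteq> [] \<longrightarrow> fst (hd es) = u \<and> snd (last es) = v \<and>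
        (\<forall>i. Suc i < length es \<longrightarrow> snd (es ! i) = fst (es ! Suc i)))"

definition path_cost :: "('v \<times> 'v \<Rightarrow> nat) \<Rightarrow> ('v \<times> 'v) list \<Rightarrow> nat" where
  "path_cost c es = sum_list (map c es)"

definition state_space :: "'s set \<Rightarrow> ('s \<times> 's) set \<Rightarrow> bool" where
  "state_space T Pi \<longleftrightarrow> finite T \<and> Pi \<subseteq> T \<times> T"

text \<open>OPT(u,v): minimum path cost, +\<infinity> if no path.\<close>
definition OPT :: "('s \<times> 's) set \<Rightarrow> ('s \<times> 's \<Rightarrow> nat) \<Rightarrow> 's \<Rightarrow> 's \<Rightarrow> enat" where
  "OPT Pi C u v = Inf {enat (path_cost C es) | es. is_path Pi u v es}"

definition abstraction ::
  "'s set \<Rightarrow> ('s \<times> 's) set \<Rightarrow> ('s \<times> 's \<Rightarrow> nat) \<Rightarrow>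
   'a set \<Rightarrow> ('a \<times> 'a) set \<Rightarrow> ('a \<times> 'a \<Rightarrow> nat) \<Rightarrow> ('a \<times> 'a \<Rightarrow> nat) \<Rightarrow> ('s \<Rightarrow> 'a) \<Rightarrow> bool" where
  "abstraction T Pi C Ta Pa Ca Ra psi \<longleftrightarrow>
     Pa \<subseteq> Ta \<times> Ta \<and>
     (\<forall>t\<in>T. psi t \<in> Ta) \<and>
     (\<forall>(u,v)\<in>Pi. (psi u, psi v) \<in> Pa) \<and>
     (\<forall>(u,v)\<in>Pi. Ca (psi u, psi v) + Ra (psi u, psi v) \<le> C (u,v))"

definition additive ::
  "nat \<Rightarrow> ('s \<times> 's) set \<Rightarrow> ('s \<times> 's \<Rightarrow> nat) \<Rightarrow> (nat \<Rightarrow> 'a \<times> 'a \<Rightarrow> nat) \<Rightarrow> (nat \<Rightarrow> 's \<Rightarrow> 'a) \<Rightarrow> bool" where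
  "additive k Pi C Ca psi \<longleftrightarrow>
     (\<forall>(u,v)\<in>Pi. (\<Sum>i=1..k. Ca i (psi i u, psi i v)) \<le> C (u,v))"

definition Cstar :: "('a \<times> 'a) set \<Rightarrow> ('a \<times> 'a \<Rightarrow> nat) \<Rightarrow> 'a \<Rightarrow> 'a \<Rightarrow> enat" where
  "Cstar Pa Ca x y = Inf {enat (path_cost Ca es) | es. is_path Pa x y es}"

definition Popt :: "('a \<times> 'a) set \<Rightarrow> ('a \<times> 'a \<Rightarrow> nat) \<Rightarrow> 'a \<Rightarrow> 'a \<Rightarrow> ('a \<times> 'a) list set" where
  "Popt Pa Ca x y = {es. is_path Pa x y es \<and> enat (path_cost Ca es) = Cstar Pa Ca x y}"

definition Rstar :: "('a \<times> 'a) set \<Rightarrow> ('a \<times> 'a \<Rightarrow> nat) \<Rightarrow> ('a \<times> 'a \<Rightarrow> nat) \<Rightarrow> 'a \<Rightarrow> 'a \<Rightarrow> enat" where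
  "Rstar Pa Ca Ra x y = Inf {enat (path_cost Ra es) | es. es \<in> Popt Pa Ca x y}"

definition h_add :: "nat \<Rightarrow> (nat \<Rightarrow> ('a \<times> 'a) set) \<Rightarrow> (nat \<Rightarrow> 'a \<times> 'a \<Rightarrow> nat) \<Rightarrow> (nat \<Rightarrow> 's \<Rightarrow> 'a) \<Rightarrow> 's \<Rightarrow> 's \<Rightarrow> enat" where
  "h_add k Pa Ca psi t g = (\<Sum>i=1..k. Cstar (Pa i) (Ca i) (psi i t) (psi i g))"

end

theory Submission
  imports Defs
begin

lemma map_path:
  assumes "is_path E u v es" "\<forall>(x,y)\<in>E. (f x, f y) \<in> Ea"
  shows "is_path Ea (f u) (f v) (map (\<lambda>(x,y). (f x, f y)) es)"
proof -
  have s: "set (map (\<lambda>(x,y). (f x, f y)) es) \<subseteq> Ea" using assms unfolding is_path_def by auto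
  show ?thesis
  proof (cases "es = []")
    case True thus ?thesis using assms unfolding is_path_def by auto
  next
    case False
    have h: "fst (hd es) = u" "snd (last es) = v"
      and c: "\<forall>i. Suc i < length es \<longrightarrow> snd (es ! i) = fst (es ! Suc i)"
      using assms False unfolding is_path_def by auto
    show ?thesis unfolding is_path_def using s False h c
      by (auto simp: hd_map last_map split: prod.splits)
  qed
qed

lemma sum_cost:
  assumes "set es \<subseteq> E" "\<forall>(u,v)\<in>E. (\<Sum>i\<in>I. Ca i (psi i u, psi i v)) \<le> C (u,v)"
  shows "(\<Sum>i\<in>I. path_cost (Ca i) (map (\<lambda>(x,y). (psi i x, psi i y)) es)) \<le> path_cost C es"
  using assms(1)
proof (induction es)
  case Nil thus ?case by (simp add: path_cost_def)
next
  case (Cons e es)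
  obtain u v where e: "e = (u,v)" by force
  have "(\<Sum>i\<in>I. path_cost (Ca i) (map (\<lambda>(x,y). (psi i x, psi i y)) (e#es)))
      = (\<Sum>i\<in>I. Ca i (psi i u, psi i v)) + (\<Sum>i\<in>I. path_cost (Ca i) (map (\<lambda>(x,y). (psi i x, psi i y)) es))"
    by (simp add: path_cost_def e sum.distrib)
  also have "\<dots> \<le> C (u,v) + path_cost C es"
    using Cons assms(2) e by (intro add_mono) auto
  finally show ?case by (simp add: path_cost_def e)
qed

lemma res_cost:
  assumes "set es \<subseteq> E" "\<forall>(u,v)\<in>E. Ca (f u, f v) + Ra (f u, f v) \<le> C (u,v)"
  shows "path_cost Ca (map (\<lambda>(x,y). (f x, f y)) es) + path_cost Ra (map (\<lambda>(x,y). (f x, f y)) es) \<le> path_cost C es"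
  using assms(1)
proof (induction es)
  case Nil thus ?case by (simp add: path_cost_def)
next
  case (Cons e es)
  obtain u v where e: "e = (u,v)" by force
  have "Ca (f u, f v) + Ra (f u, f v) \<le> C (u,v)" using Cons assms(2) e by auto
  moreover have "path_cost Ca (map (\<lambda>(x,y). (f x, f y)) es) + path_cost Ra (map (\<lambda>(x,y). (f x, f y)) es) \<le> path_cost C es"
    using Cons by auto
  ultimately show ?case by (simp add: path_cost_def e)
qed

theorem lemma10:
  fixes T :: "'s set" and Pi :: "('s \<times> 's) set" and C :: "'s \<times> 's \<Rightarrow> nat"
    and k :: nat
    and Ta :: "nat \<Rightarrow> 'a set" and Pa :: "nat \<Rightarrow> ('a \<times> 'a) set"
    and Ca Ra :: "nat \<Rightarrow> 'a \<times> 'a \<Rightarrow> nat" and psi :: "nat \<Rightarrow> 's \<Rightarrow> 'a"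
    and t g :: 's and j :: nat
  assumes "state_space T Pi"
    and "\<forall>i\<in>{1..k}. abstraction T Pi C (Ta i) (Pa i) (Ca i) (Ra i) (psi i)"
    and "additive k Pi C Ca psi"
    and "t \<in> T" and "g \<in> T"
    and "j \<in> {1..k}"
    and "h_add k Pa Ca psi t g < Cstar (Pa j) (Ca j) (psi j t) (psi j g) + Rstar (Pa j) (Ca j) (Ra j) (psi j t) (psi j g)"
  shows "h_add k Pa Ca psi t g \<noteq> OPT Pi C t g"
proof
  assume eq: "h_add k Pa Ca psi t g = OPT Pi C t g"
  let ?S = "{enat (path_cost C es) | es. is_path Pi t g es}"
  have "OPT Pi C t g \<noteq> \<infinity>" using eq assms(7) by (metis enat_ord_simps(6) not_infinity_eq)
  hence "?S \<noteq> {}" unfolding OPT_def by (metis Inf_empty top_enat_def)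
  then obtain x where "x \<in> ?S" by blast
  hence "OPT Pi C t g \<in> ?S" unfolding OPT_def by (rule wellorder_InfI)
  then obtain es where es: "is_path Pi t g es" and opt: "OPT Pi C t g = enat (path_cost C es)" by auto
  define p where "p i = map (\<lambda>(x,y). (psi i x, psi i y)) es" for i
  define a where "a i = path_cost (Ca i) (p i)" for i
  have pp: "is_path (Pa i) (psi i t) (psi i g) (p i)" if "i \<in> {1..k}" for i
    unfolding p_def using that assms(2) es by (intro map_path) (auto simp: abstraction_def)
  have le: "Cstar (Pa i) (Ca i) (psi i t) (psi i g) \<le> enat (a i)" if "i \<in> {1..k}" for i
    unfolding Cstar_def a_def using pp[OF that] by (intro Inf_lower) auto
  define c where "c i = the_enat (Cstar (Pa i) (Ca i) (psi i t) (psi i g))" for i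
  have c: "Cstar (Pa i) (Ca i) (psi i t) (psi i g) = enat (c i)" if ik: "i \<in> {1..k}" for i
  proof -
    obtain n where "Cstar (Pa i) (Ca i) (psi i t) (psi i g) = enat n" using enat_ile[OF le[OF ik]] by (elim exE)
    thus ?thesis unfolding c_def by simp
  qed
  have cle: "c i \<le> a i" if "i \<in> {1..k}" for i using le[OF that] c[OF that] by auto
  have sumA: "(\<Sum>i=1..k. a i) \<le> path_cost C es"
    unfolding a_def p_def
    using es assms(3) by (intro sum_cost[where E=Pi]) (auto simp: is_path_def additive_def)
  have hadd: "h_add k Pa Ca psi t g = enat (\<Sum>i=1..k. c i)"
  proof -
    have "h_add k Pa Ca psi t g = (\<Sum>i=1..k. of_nat (c i))"
      unfolding h_add_def by (rule sum.cong) (simp_all add: c of_nat_eq_enat)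
    also have "\<dots> = of_nat (\<Sum>i=1..k. c i)" by (rule of_nat_sum[symmetric])
    finally show ?thesis by (simp add: of_nat_eq_enat)
  qed
  have sumC: "(\<Sum>i=1..k. c i) = path_cost C es" using eq hadd opt by simp
  have "(\<Sum>i=1..k. a i) = (\<Sum>i=1..k. c i) + (\<Sum>i=1..k. a i - c i)"
    using cle by (simp add: sum.distrib[symmetric])
  hence "(\<Sum>i=1..k. a i - c i) = 0" using sumA sumC by linarith
  hence "a j - c j = 0" using assms(6) by simp
  hence ajc: "a j = c j" using cle[OF assms(6)] by simp
  have "p j \<in> Popt (Pa j) (Ca j) (psi j t) (psi j g)"
    unfolding Popt_def using pp[OF assms(6)] c[OF assms(6)] ajc a_def by auto
  hence R: "Rstar (Pa j) (Ca j) (Ra j) (psi j t) (psi j g) \<le> enat (path_cost (Ra j) (p j))"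
    unfolding Rstar_def by (intro Inf_lower) auto
  have "a j + path_cost (Ra j) (p j) \<le> path_cost C es"
    unfolding a_def p_def using es assms(2,6)
    by (intro res_cost[where E=Pi]) (auto simp: is_path_def abstraction_def)
  have "Cstar (Pa j) (Ca j) (psi j t) (psi j g) + Rstar (Pa j) (Ca j) (Ra j) (psi j t) (psi j g)
     \<le> h_add k Pa Ca psi t g"
  proof -
    have "Cstar (Pa j) (Ca j) (psi j t) (psi j g) + Rstar (Pa j) (Ca j) (Ra j) (psi j t) (psi j g)
       \<le> enat (a j) + enat (path_cost (Ra j) (p j))"
      using R c[OF assms(6)] ajc by (metis add_left_mono plus_enat_simps(1))
    also have "\<dots> = enat (a j + path_cost (Ra j) (p j))" by simp
    also have "\<dots> \<le> enat (path_cost C es)" using \<open>a j + path_cost (Ra j) (p j) \<le> path_cost C es\<close> by simp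
    also have "\<dots> = h_add k Pa Ca psi t g" using hadd sumC by simp
    finally show ?thesis .
  qed
  thus False using assms(7) by simp
qed

end
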